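(* Let $a,n\in\mathbb{N}$, $k_1,\ldots,k_n\in\mathbb{N}$, $K=\operatorname{lcm}(k_1,\ldots,k_n)$, and let $f_1,\ldots,f_n,g_1,\ldots,g_n$ be arbitrary arithmetic functions. Define $G(m)=\prod_{i=1}^n s^{(a)}_{f_i,g_i,\mathbf 1}(k_i,m)$ for $m\in\mathbb{N}$. (i) If $\omega$ is completely multiplicative, then $$\sum_{j=1}^{K^a}\omega(j)G(j)=\sum_{d|K^a}\omega(d)G(d)\,\Psi\Bigl(\frac{K^a}{d}\Bigr)=\bigl((\omega G)*\Psi\bigr)(K^a),$$ (ii) If $\omega$ is completely additive, then $$\sum_{j=1}^{K^a}\omega(j)G(j)=\bigl((\omega G)*\phi\bigr)(K^a)+(G*\Psi)(K^a).$$ Here $\Psi(m)=\sum_{1\le\ell\le m,\ \gcd(\ell,m)=1}\omega(\ell)$.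
   Context: An arithmetic function is a map $\mathbb{N}\to\mathbb{C}$; $(f*g)(n)=\sum_{d|n}f(d)g(n/d)$ is the Dirichlet convolution and $\omega G$ denotes the pointwise product $m\mapsto\omega(m)G(m)$. $\phi$ is Euler's totient function. $\omega$ is completely multiplicative if $\omega(1)=1$ and $\omega(mn)=\omega(m)\omega(n)$ for all $m,n$; completely additive if $\omega(mn)=\omega(m)+\omega(n)$ for all $m,n$. For $a\in\mathbb{N}$, $s^{(a)}_{f,g,\mathbf 1}(k,j)=\sum_{d|k,\ d^a|j} f(d)\,g(k/d)$. *)

theory Defs
  imports Complex_Main "HOL-Number_Theory.Number_Theory"
begin

text \<open>Arithmetic functions are modelled as nat => complex; values at 0 are irrelevant.\<close>

definition dirichlet_conv :: "(nat \<Rightarrow> complex) \<Rightarrow> (nat \<Rightarrow> complex) \<Rightarrow> nat \<Rightarrow> complex" where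
  "dirichlet_conv f g n = (\<Sum>d\<in>{d. d dvd n}. f d * g (n div d))"

definition completely_multiplicative :: "(nat \<Rightarrow> complex) \<Rightarrow> bool" where
  "completely_multiplicative w \<longleftrightarrow> w 1 = 1 \<and> (\<forall>m n. m > 0 \<longrightarrow> n > 0 \<longrightarrow> w (m * n) = w m * w n)"

definition completely_additive :: "(nat \<Rightarrow> complex) \<Rightarrow> bool" where
  "completely_additive w \<longleftrightarrow> (\<forall>m n. m > 0 \<longrightarrow> n > 0 \<longrightarrow> w (m * n) = w m + w n)"

definition s_fun :: "nat \<Rightarrow> (nat \<Rightarrow> complex) \<Rightarrow> (nat \<Rightarrow> complex) \<Rightarrow> nat \<Rightarrow> nat \<Rightarrow> complex" where
  "s_fun a f g k j = (\<Sum>d\<in>{d. d dvd k \<and> d ^ a dvd j}. f d * g (k div d))"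

definition Psi :: "(nat \<Rightarrow> complex) \<Rightarrow> nat \<Rightarrow> complex" where
  "Psi w m = (\<Sum>l\<in>{l\<in>{1..m}. coprime l m}. w l)"

end

theory Submission
  imports Defs
begin

lemma regroup:
  fixes N :: nat and F :: "nat \<Rightarrow> complex"
  assumes N: "N > 0"
  shows "(\<Sum>j=1..N. F j) = (\<Sum>d\<in>{d. d dvd N}. \<Sum>l\<in>{l\<in>{1..N div d}. coprime l (N div d)}. F (d*l))"
proof -
  have fin: "finite {d. d dvd N}" using N by simp
  have "(\<Sum>j=1..N. F j) = (\<Sum>d\<in>{d. d dvd N}. \<Sum>j\<in>{j. j \<in> {1..N} \<and> gcd j N = d}. F j)"
    by (rule sum.group[symmetric]) (use fin in auto)
  also have "\<dots> = (\<Sum>d\<in>{d. d dvd N}. \<Sum>l\<in>{l\<in>{1..N div d}. coprime l (N div d)}. F (d*l))"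
  proof (rule sum.cong[OF refl])
    fix d assume "d \<in> {d. d dvd N}"
    then have dN: "d dvd N" by simp
    then obtain m where m: "N = d * m" by (auto elim: dvdE)
    have d0: "d > 0" using N m by (cases d) auto
    have md: "N div d = m" using m d0 by simp
    have set: "{j. j \<in> {1..N} \<and> gcd j N = d} = (\<lambda>l. d*l) ` {l\<in>{1..N div d}. coprime l (N div d)}"
    proof (rule Set.set_eqI, rule iffI)
      fix j assume j: "j \<in> {j. j \<in> {1..N} \<and> gcd j N = d}"
      then have "d dvd j" by (metis (mono_tags, lifting) gcd_dvd1 mem_Collect_eq)
      then obtain l where l: "j = d * l" by (auto elim: dvdE)
      have "gcd (d*l) (d*m) = d" using j l m by simp
      then have "d * gcd l m = d" by (simp only: gcd_mult_distrib_nat)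
      then have "gcd l m = 1" using d0 by simp
      then have cp: "coprime l m" by (rule gcd_eq_1_imp_coprime)
      moreover have "1 \<le> l" "l \<le> m" using j l m d0 by (auto simp: Suc_le_eq)
      ultimately have "l \<in> {l\<in>{1..N div d}. coprime l (N div d)}"
        using md by simp
      then show "j \<in> (\<lambda>l. d*l) ` {l\<in>{1..N div d}. coprime l (N div d)}"
        using l by (rule rev_image_eqI)
    next
      fix j assume "j \<in> (\<lambda>l. d*l) ` {l\<in>{1..N div d}. coprime l (N div d)}"
      then obtain l where l: "j = d*l" "1 \<le> l" "l \<le> m" "coprime l m" using md by auto
      have "gcd j N = d * gcd l m" unfolding l(1) m by (rule gcd_mult_distrib_nat[symmetric])
      also have "gcd l m = 1" using l(4) by (rule coprime_imp_gcd_eq_1)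
      finally have "gcd j N = d" by simp
      moreover have "1 \<le> j" "j \<le> N" using l m d0 by auto
      ultimately show "j \<in> {j. j \<in> {1..N} \<and> gcd j N = d}" by simp
    qed
    have inj: "inj_on (\<lambda>l. d*l) {l\<in>{1..N div d}. coprime l (N div d)}"
      using d0 by (auto simp: inj_on_def)
    show "(\<Sum>j\<in>{j. j \<in> {1..N} \<and> gcd j N = d}. F j) =
          (\<Sum>l\<in>{l\<in>{1..N div d}. coprime l (N div d)}. F (d*l))"
      unfolding set sum.reindex[OF inj] by (simp add: comp_def)
  qed
  finally show ?thesis .
qed

lemma gcd_facts:
  fixes N d l :: nat
  assumes N: "N > 0" and dN: "d dvd N" and l: "coprime l (N div d)"
  shows "gcd (d*l) N = d"
proof -
  obtain m where m: "N = d * m" using dN by (auto elim: dvdE)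
  have d0: "d > 0" using N m by (cases d) auto
  have "N div d = m" using m d0 by simp
  have "gcd (d*l) N = d * gcd l m" unfolding m by (rule gcd_mult_distrib_nat[symmetric])
  also have "gcd l m = 1" using l \<open>N div d = m\<close> coprime_imp_gcd_eq_1 by blast
  finally show ?thesis by simp
qed

theorem theorem3:
  fixes a n :: nat
    and k :: "nat \<Rightarrow> nat"
    and f g :: "nat \<Rightarrow> nat \<Rightarrow> complex"
    and w :: "nat \<Rightarrow> complex"
    and K :: nat
    and G :: "nat \<Rightarrow> complex"
  assumes "a > 0" and "n > 0"
    and "\<forall>i\<in>{1..n}. k i > 0"
    and K_def: "K = Lcm (k ` {1..n})"
    and G_def: "\<forall>m. G m = (\<Prod>i\<in>{1..n}. s_fun a (f i) (g i) (k i) m)"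
  shows "(completely_multiplicative w \<longrightarrow>
            (\<Sum>j=1..K^a. w j * G j) = (\<Sum>d\<in>{d. d dvd K^a}. w d * G d * Psi w (K^a div d))
          \<and> (\<Sum>d\<in>{d. d dvd K^a}. w d * G d * Psi w (K^a div d))
              = dirichlet_conv (\<lambda>m. w m * G m) (Psi w) (K^a))
       \<and> (completely_additive w \<longrightarrow>
            (\<Sum>j=1..K^a. w j * G j)
              = dirichlet_conv (\<lambda>m. w m * G m) (\<lambda>m. of_nat (totient m)) (K^a)
                + dirichlet_conv G (Psi w) (K^a))"
proof -
  define N where "N = K^a"
  have K0: "K > 0" unfolding K_def using assms(3)
  proof -
    have "0 \<notin> k ` {1..n}" using assms(3) by auto
    then have "Lcm (k ` {1..n}) \<noteq> 0" by (subst Lcm_0_iff) auto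
    then show "Lcm (k ` {1..n}) > 0" using neq0_conv by blast
  qed
  have N0: "N > 0" unfolding N_def using K0 by simp
  have Ggcd: "G j = G (gcd j N)" for j
  proof -
    have sj: "s_fun a (f i) (g i) (k i) j = s_fun a (f i) (g i) (k i) (gcd j N)" if i: "i \<in> {1..n}" for i
    proof -
      have "k i dvd K" unfolding K_def using i by simp
      have "d ^ a dvd j \<longleftrightarrow> d ^ a dvd gcd j N" if "d dvd k i" for d
      proof -
        have "d dvd K" using that \<open>k i dvd K\<close> by (rule dvd_trans)
        then have "d ^ a dvd N" unfolding N_def by (rule dvd_power_same)
        then show ?thesis by simp
      qed
      then show ?thesis unfolding s_fun_def
        by (metis (no_types, lifting) Collect_cong)
    qed
    have "(\<Prod>i\<in>{1..n}. s_fun a (f i) (g i) (k i) j) = (\<Prod>i\<in>{1..n}. s_fun a (f i) (g i) (k i) (gcd j N))"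
      by (rule prod.cong[OF refl]) (rule sj)
    then show ?thesis using G_def by simp
  qed
  have Gdl: "G (d*l) = G d" if "d dvd N" "coprime l (N div d)" for d l
    using Ggcd[of "d*l"] gcd_facts[OF N0 that] by simp
  have R: "(\<Sum>j=1..N. w j * G j) = (\<Sum>d\<in>{d. d dvd N}. \<Sum>l\<in>{l\<in>{1..N div d}. coprime l (N div d)}. w (d*l) * G d)"
    unfolding regroup[OF N0] by (intro sum.cong refl) (auto simp: Gdl)
  have part1: "completely_multiplicative w \<Longrightarrow>
     (\<Sum>j=1..N. w j * G j) = (\<Sum>d\<in>{d. d dvd N}. w d * G d * Psi w (N div d))"
  proof -
    assume cm: "completely_multiplicative w"
    show ?thesis unfolding R Psi_def
    proof (intro sum.cong refl)
      fix d assume "d \<in> {d. d dvd N}"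
      then have d0: "d > 0" using N0 by (auto intro: Nat.gr0I)
      have "(\<Sum>l\<in>{l\<in>{1..N div d}. coprime l (N div d)}. w (d*l) * G d)
          = (\<Sum>l\<in>{l\<in>{1..N div d}. coprime l (N div d)}. w d * G d * w l)"
        using cm d0 by (intro sum.cong refl) (auto simp: completely_multiplicative_def)
      also have "\<dots> = w d * G d * (\<Sum>l\<in>{l\<in>{1..N div d}. coprime l (N div d)}. w l)"
        by (simp add: sum_distrib_left)
      finally show "(\<Sum>l\<in>{l\<in>{1..N div d}. coprime l (N div d)}. w (d*l) * G d) = \<dots>" .
    qed
  qed
  have part2: "completely_additive w \<Longrightarrow>
     (\<Sum>j=1..N. w j * G j) = dirichlet_conv (\<lambda>m. w m * G m) (\<lambda>m. of_nat (totient m)) N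
                + dirichlet_conv G (Psi w) N"
  proof -
    assume ca: "completely_additive w"
    have "(\<Sum>j=1..N. w j * G j) = (\<Sum>d\<in>{d. d dvd N}. w d * G d * of_nat (totient (N div d)) + G d * Psi w (N div d))"
      unfolding R
    proof (intro sum.cong refl)
      fix d assume "d \<in> {d. d dvd N}"
      then have d0: "d > 0" using N0 by (auto intro: Nat.gr0I)
      define S where "S = {l\<in>{1..N div d}. coprime l (N div d)}"
      have tot: "S = totatives (N div d)" unfolding S_def totatives_def by auto
      have "(\<Sum>l\<in>S. w (d*l) * G d) = (\<Sum>l\<in>S. w d * G d + G d * w l)"
        using ca d0 unfolding S_def
        by (intro sum.cong refl) (auto simp: completely_additive_def algebra_simps)
      also have "\<dots> = w d * G d * of_nat (card S) + G d * (\<Sum>l\<in>S. w l)"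
        by (simp add: sum.distrib sum_distrib_left)
      also have "\<dots> = w d * G d * of_nat (totient (N div d)) + G d * Psi w (N div d)"
        unfolding tot totient_def Psi_def S_def[symmetric] tot ..
      finally show "(\<Sum>l\<in>{l\<in>{1..N div d}. coprime l (N div d)}. w (d*l) * G d) = \<dots>"
        unfolding S_def .
    qed
    then show ?thesis unfolding dirichlet_conv_def by (simp add: sum.distrib)
  qed
  have dc: "dirichlet_conv (\<lambda>m. w m * G m) (Psi w) N = (\<Sum>d\<in>{d. d dvd N}. w d * G d * Psi w (N div d))"
    by (simp only: dirichlet_conv_def)
  show ?thesis unfolding N_def[symmetric]
  proof (intro conjI impI)
    assume cm: "completely_multiplicative w"
    show "(\<Sum>j = 1..N. w j * G j) = (\<Sum>d | d dvd N. w d * G d * Psi w (N div d))"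
      by (rule part1[OF cm])
    show "(\<Sum>d | d dvd N. w d * G d * Psi w (N div d)) = dirichlet_conv (\<lambda>m. w m * G m) (Psi w) N"
      by (rule dc[symmetric])
  next
    assume ca: "completely_additive w"
    show "(\<Sum>j = 1..N. w j * G j) =
      dirichlet_conv (\<lambda>m. w m * G m) (\<lambda>m. complex_of_nat (totient m)) N + dirichlet_conv G (Psi w) N"
      by (rule part2[OF ca])
  qed
qed

end
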